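(* Let $k\ge0$ and $m\ge0$ be integers and $a,b,c,d,w\in\mathbb{C}$ generic. (i) $${}_5F_4\!\left[\begin{matrix}\tfrac a2,\ \tfrac12+\tfrac a2,\ 1-k+a-b-c,\ 1+a-w,\ -m\\ 1+a-b,\ 1+a-c,\ \tfrac12+\tfrac12(a-w-m),\ 1+\tfrac12(a-w-m)\end{matrix}\,\Big|\,1\right]=\frac{(w)_m}{(w-a)_m}\sum_{n=0}^m\frac{(a)_n(b)_n(c)_n(-m)_n}{n!\,(1+a-b)_n(1+a-c)_n(w)_n}\,Q_k^{(2)}(n;a;b,c).$$ (ii) $${}_6F_5\!\left[\begin{matrix}\tfrac a2,\ \tfrac12+\tfrac a2,\ 1-k+a-b-c,\ k+d,\ 1+a-w,\ -m\\ 1+a-b,\ 1+a-c,\ d,\ \tfrac12+\tfrac12(a-w-m),\ 1+\tfrac12(a-w-m)\end{matrix}\,\Big|\,1\right]=\frac{(w)_m}{(w-a)_m}\sum_{n=0}^m\frac{(a)_n(b)_n(c)_n(-m)_n}{n!\,(1+a-b)_n(1+a-c)_n(w)_n}\,Q_k^{(2)}(n;a;b,c,d).$$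
   Context: $(c)_n$ denotes the Pochhammer symbol, $(c)_0=1$; ${}_pF_q(1)$ is the terminating generalized hypergeometric series at $1$. $Q_k^{(2)}(n;a;b,c)=\sum_{j=0}^k\frac{(-n)_j(n+a)_j(-k)_j}{j!(b)_j(c)_j}$ and $Q_k^{(2)}(n;a;b,c,d)=\sum_{j=0}^k\frac{(-n)_j(n+a)_j(-k)_j(k-1-a+b+c+d)_j}{j!(b)_j(c)_j(d)_j}$. Parameters are generic so no lower parameter is a nonpositive integer. *)

theory Defs
  imports "HOL-Analysis.Analysis" "HOL-Library.Nonpos_Ints"
begin

text \<open>Terminating generalized hypergeometric series at argument 1, summed up to index N
  (used with N = m when one upper parameter is -m, so all later terms vanish).\<close>
definition hypF :: "complex list \<Rightarrow> complex list \<Rightarrow> nat \<Rightarrow> complex" where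
  "hypF us ls N = (\<Sum>j=0..N. (\<Prod>u\<leftarrow>us. pochhammer u j) /
       ((\<Prod>l\<leftarrow>ls. pochhammer l j) * fact j))"

definition Q2 :: "nat \<Rightarrow> nat \<Rightarrow> complex \<Rightarrow> complex \<Rightarrow> complex \<Rightarrow> complex" where
  "Q2 k n a b c = (\<Sum>j=0..k. pochhammer (- of_nat n) j * pochhammer (of_nat n + a) j
       * pochhammer (- of_nat k) j / (fact j * pochhammer b j * pochhammer c j))"

definition Q2d :: "nat \<Rightarrow> nat \<Rightarrow> complex \<Rightarrow> complex \<Rightarrow> complex \<Rightarrow> complex \<Rightarrow> complex" where
  "Q2d k n a b c d = (\<Sum>j=0..k. pochhammer (- of_nat n) j * pochhammer (of_nat n + a) j
       * pochhammer (- of_nat k) j * pochhammer (of_nat k - 1 - a + b + c + d) j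
       / (fact j * pochhammer b j * pochhammer c j * pochhammer d j))"

end

theory Submission
  imports Defs
begin


lemma nz_poch:
  fixes z :: complex
  assumes "z \<notin> \<int>\<^sub>\<le>\<^sub>0"
  shows "pochhammer (z + of_nat j) n \<noteq> 0"
proof
  assume "pochhammer (z + of_nat j) n = 0"
  then obtain k where "z + of_nat j = - of_nat k" by (auto simp: pochhammer_eq_0_iff)
  then have "z = - of_nat k - of_nat j" by (simp add: eq_diff_eq)
  then have "z = - of_nat (k + j)" by simp
  then show False using assms by (metis minus_of_nat_in_nonpos_Ints)
qed

lemma saal_step:
  fixes A B C :: complex
  assumes C: "\<And>t. C + of_nat t \<noteq> 0" and j: "j \<le> n"
  defines "F \<equiv> \<lambda>n j. of_nat (n choose j) * pochhammer A j * pochhammer B j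
        * pochhammer (C + of_nat j) (n-j) * pochhammer (C-A-B) (n-j)"
  defines "G \<equiv> \<lambda>j. F (Suc n) j * of_nat j * (1 - C - of_nat j) / ((of_nat n + 1) * (of_nat n + C))"
  shows "F (Suc n) j - (C - A + of_nat n) * (C - B + of_nat n) * F n j = G (Suc j) - G j"
proof -
  obtain m where m: "n = j + m" using j le_Suc_ex by blast
  have b1: "of_nat (Suc n choose j) * (of_nat m + 1) = (of_nat (n choose j) :: complex) * (of_nat n + 1)"
  proof -
    have "(Suc n - j) * (Suc n choose j) = Suc n * (n choose j)"
      using binomial_absorb_comp[of "Suc n" j] by simp
    then have "(Suc n choose j) * (m + 1) = (n choose j) * (n+1)" using m by (simp add: Suc_diff_le algebra_simps)
    then have "(of_nat ((Suc n choose j) * (m + 1)) :: complex) = of_nat ((n choose j) * (n+1))" by (simp only:)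
    then show ?thesis by (simp add: algebra_simps)
  qed
  have b2: "of_nat (Suc n choose Suc j) * (of_nat j + 1) = (of_nat (n choose j) :: complex) * (of_nat n + 1)"
  proof -
    have "Suc n * (n choose j) = (Suc n choose Suc j) * Suc j" by (rule Suc_times_binomial_eq)
    then have "(of_nat (Suc n * (n choose j)) :: complex) = of_nat ((Suc n choose Suc j) * Suc j)" by (simp only:)
    then show ?thesis by (simp add: algebra_simps)
  qed
  have Cj: "C + of_nat j \<noteq> 0" using C by blast
  have Cn: "of_nat n + C \<noteq> 0" using C[of n] by (simp add: add.commute)
  have n1: "(of_nat n + 1 :: complex) \<noteq> 0" by (metis of_nat_Suc of_nat_neq_0 add.commute)
  have m1: "(of_nat m + 1 :: complex) \<noteq> 0" by (metis of_nat_Suc of_nat_neq_0 add.commute)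
  have j1: "(of_nat j + 1 :: complex) \<noteq> 0" by (metis of_nat_Suc of_nat_neq_0 add.commute)
  define X where "X = pochhammer A j * pochhammer B j * pochhammer (C + of_nat j) m * pochhammer (C-A-B) m * of_nat (n choose j)"
  have pC: "pochhammer (C + of_nat (Suc j)) m = pochhammer (C + of_nat j) m * (C + of_nat j + of_nat m) / (C + of_nat j)"
  proof -
    have "pochhammer (C + of_nat j) (Suc m) = (C + of_nat j) * pochhammer (C + of_nat j + 1) m"
      by (rule pochhammer_rec)
    moreover have "pochhammer (C + of_nat j) (Suc m) = pochhammer (C + of_nat j) m * (C + of_nat j + of_nat m)"
      by (rule pochhammer_Suc)
    ultimately show ?thesis using Cj by (simp add: field_simps)
  qed
  have bb1: "of_nat (Suc n choose j) = (of_nat (n choose j) :: complex) * (of_nat n + 1) / (of_nat m + 1)"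
    using b1 m1 by (simp add: field_simps)
  have bb2: "of_nat (Suc n choose Suc j) = (of_nat (n choose j) :: complex) * (of_nat n + 1) / (of_nat j + 1)"
    using b2 j1 by (simp add: field_simps)
  have s1: "Suc n - j = Suc m" using m by simp
  have s2: "Suc n - Suc j = m" using m by simp
  have s3: "n - j = m" using m by simp
  have e1: "F (Suc n) j = X * ((C + of_nat j + of_nat m) * (C - A - B + of_nat m) * (of_nat n + 1) / (of_nat m + 1))"
    unfolding F_def X_def s1 bb1 by (simp add: pochhammer_Suc)
  have e0: "F n j = X" unfolding F_def X_def s3 by simp
  have e2: "F (Suc n) (Suc j) = X * ((A + of_nat j) * (B + of_nat j) * (C + of_nat j + of_nat m) / (C + of_nat j) * (of_nat n + 1) / (of_nat j + 1))"
    unfolding F_def X_def s2 bb2 pC by (simp add: pochhammer_Suc mult_ac)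
  define E where "E = C - A - B"
  define jj where "jj = (of_nat j :: complex)"
  define mm where "mm = (of_nat m :: complex)"
  have nn: "(of_nat n :: complex) = jj + mm" unfolding jj_def mm_def m by simp
  have sj: "(of_nat (Suc j) :: complex) = jj + 1" unfolding jj_def by simp
  have m1': "mm + 1 \<noteq> 0" using m1 mm_def by simp
  have j1': "jj + 1 \<noteq> 0" using j1 jj_def by simp
  have Cj': "C + jj \<noteq> 0" using Cj jj_def by simp
  have Cn': "jj + mm + C \<noteq> 0" using Cn nn by simp
  have n1': "jj + mm + 1 \<noteq> 0" using n1 nn by simp
  have poly: "(C + jj + mm) * (E + mm) * (jj + mm + 1) - (mm + 1) * (C - A + (jj + mm)) * (C - B + (jj + mm))
     + (mm + 1) * (A + jj) * (B + jj) + (E + mm) * jj * (1 - C - jj) = 0"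
    unfolding E_def by (simp add: algebra_simps)
  have cf: "(C + jj + mm) * (E + mm) * (jj + mm + 1) / (mm + 1) - (C - A + (jj + mm)) * (C - B + (jj + mm))
     = - (A + jj) * (B + jj) - (E + mm) * jj * (1 - C - jj) / (mm + 1)"
    using poly m1' by (simp add: field_simps)
  have L: "F (Suc n) j - (C - A + of_nat n) * (C - B + of_nat n) * F n j
     = X * ((C + jj + mm) * (E + mm) * (jj + mm + 1) / (mm + 1) - (C - A + (jj + mm)) * (C - B + (jj + mm)))"
    unfolding e1 e0 nn E_def jj_def mm_def by (simp add: algebra_simps)
  have R1: "G (Suc j) = - X * (A + jj) * (B + jj)"
  proof -
    have "G (Suc j) = X * ((A + jj) * (B + jj) * (C + jj + mm) / (C + jj) * (jj + mm + 1) / (jj + 1)) * (jj + 1) * (1 - C - (jj + 1)) / ((jj + mm + 1) * (jj + mm + C))"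
      unfolding G_def e2 sj nn jj_def mm_def by simp
    also have "\<dots> = - X * (A + jj) * (B + jj)"
      using m1' j1' Cj' Cn' n1' by (simp add: divide_simps) algebra
    finally show ?thesis .
  qed
  have R2: "G j = X * ((E + mm) * jj * (1 - C - jj) / (mm + 1))"
  proof -
    have "G j = X * ((C + jj + mm) * (E + mm) * (jj + mm + 1) / (mm + 1)) * jj * (1 - C - jj) / ((jj + mm + 1) * (jj + mm + C))"
      unfolding G_def e1 nn jj_def mm_def E_def by simp
    also have "\<dots> = X * ((E + mm) * jj * (1 - C - jj) / (mm + 1))"
      using m1' j1' Cj' Cn' n1' by (simp add: divide_simps)
    finally show ?thesis .
  qed
  have R: "G (Suc j) - G j = X * (- (A + jj) * (B + jj) - (E + mm) * jj * (1 - C - jj) / (mm + 1))"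
    unfolding R1 R2 by (simp add: algebra_simps)
  show ?thesis using L R cf by simp
qed

lemma saal:
  fixes A B C :: complex
  assumes C: "\<And>t. C + of_nat t \<noteq> 0"
  shows "(\<Sum>j=0..n. of_nat (n choose j) * pochhammer A j * pochhammer B j
        * pochhammer (C + of_nat j) (n-j) * pochhammer (C-A-B) (n-j)) = pochhammer (C-A) n * pochhammer (C-B) n"
proof (induction n)
  case 0
  show ?case by simp
next
  case (Suc n)
  define F where "F \<equiv> \<lambda>n j. of_nat (n choose j) * pochhammer A j * pochhammer B j
        * pochhammer (C + of_nat j) (n-j) * pochhammer (C-A-B) (n-j)"
  define G where "G \<equiv> \<lambda>j. F (Suc n) j * of_nat j * (1 - C - of_nat j) / ((of_nat n + 1) * (of_nat n + C))"
  define r where "r = (C - A + of_nat n) * (C - B + of_nat n)"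
  have step: "F (Suc n) j - r * F n j = G (Suc j) - G j" if "j \<le> n" for j
    using saal_step[OF C that, of A B] unfolding F_def G_def r_def by simp
  have Cn: "of_nat n + C \<noteq> 0" using C[of n] by (simp add: add.commute)
  have n1: "(of_nat n + 1 :: complex) \<noteq> 0" by (metis of_nat_Suc of_nat_neq_0 add.commute)
  have z1: "F n (Suc n) = 0" unfolding F_def by simp
  have z2: "G (Suc (Suc n)) = 0"
  proof -
    have "Suc n choose Suc (Suc n) = 0" by (rule binomial_eq_0) simp
    then show ?thesis unfolding G_def F_def by (simp del: binomial_Suc_Suc)
  qed
  have g1: "G (Suc n) = - F (Suc n) (Suc n)"
  proof -
    have "(1 - C - of_nat (Suc n)) = - (of_nat n + C)" by simp
    then show ?thesis unfolding G_def using Cn n1 by (simp add: divide_simps) algebra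
  qed
  have lastst: "F (Suc n) (Suc n) - r * F n (Suc n) = G (Suc (Suc n)) - G (Suc n)"
    using z1 z2 g1 by simp
  have all: "F (Suc n) j - r * F n j = G (Suc j) - G j" if "j \<le> Suc n" for j
    using step lastst that by (cases "j = Suc n") auto
  have "(\<Sum>j=0..Suc n. F (Suc n) j) - r * (\<Sum>j=0..n. F n j)
      = (\<Sum>j=0..Suc n. F (Suc n) j) - r * (\<Sum>j=0..Suc n. F n j)"
    using z1 by simp
  also have "\<dots> = (\<Sum>j=0..Suc n. F (Suc n) j - r * F n j)"
    by (simp only: sum_subtractf sum_distrib_left)
  also have "\<dots> = (\<Sum>j=0..Suc n. G (Suc j) - G j)"
    using all by (intro sum.cong) auto
  also have "\<dots> = G (Suc (Suc n)) - G 0" by (rule sum_Suc_diff) simp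
  also have "\<dots> = 0" using z2 unfolding G_def by simp
  finally have "(\<Sum>j=0..Suc n. F (Suc n) j) = r * (\<Sum>j=0..n. F n j)" by simp
  also have "(\<Sum>j=0..n. F n j) = pochhammer (C-A) n * pochhammer (C-B) n"
    using Suc.IH unfolding F_def by simp
  finally show ?case unfolding F_def r_def by (simp add: pochhammer_Suc mult_ac)
qed

lemma swap_tri:
  fixes f :: "nat \<Rightarrow> nat \<Rightarrow> complex"
  shows "(\<Sum>n=0..m. \<Sum>i=0..n. f n i) = (\<Sum>i=0..m. \<Sum>n=i..m. f n i)"
proof (induction m)
  case 0
  then show ?case by simp
next
  case (Suc m)
  have "(\<Sum>i=0..Suc m. \<Sum>n=i..Suc m. f n i) = (\<Sum>i=0..m. \<Sum>n=i..Suc m. f n i) + f (Suc m) (Suc m)"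
    by simp
  also have "(\<Sum>i=0..m. \<Sum>n=i..Suc m. f n i) = (\<Sum>i=0..m. (\<Sum>n=i..m. f n i) + f (Suc m) i)"
    by (intro sum.cong) auto
  finally show ?case using Suc by (simp add: sum.distrib)
qed

lemma L3:
  fixes x :: complex
  assumes "i \<le> m"
  shows "(-1)^i * pochhammer (x - of_nat i) (m-i) * pochhammer (1 - x - of_nat m) (2*i) = pochhammer (1-x) i * pochhammer x m"
proof -
  have r1: "pochhammer (1-x) i = (-1)^i * pochhammer (x - of_nat i) i"
    using pochhammer_minus[of "x - 1" i] by (simp add: algebra_simps)
  have r2: "pochhammer (1 - x - of_nat m) (2*i) = pochhammer (x - of_nat i + of_nat (m-i) ) (2*i)"
  proof -
    have "pochhammer (1 - x - of_nat m) (2*i) = (-1)^(2*i) * pochhammer (x + of_nat m - 1 - of_nat (2*i) + 1) (2*i)"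
      using pochhammer_minus[of "x + of_nat m - 1" "2*i"] by (simp add: algebra_simps)
    also have "x + of_nat m - 1 - of_nat (2*i) + 1 = x - of_nat i + of_nat (m-i)"
      using assms by (simp add: of_nat_diff algebra_simps)
    finally show ?thesis by (simp add: power_mult)
  qed
  have p1: "pochhammer (x - of_nat i) (m-i) * pochhammer (x - of_nat i + of_nat (m-i)) (2*i) = pochhammer (x - of_nat i) (m - i + 2*i)"
    by (rule pochhammer_product'[symmetric])
  have p2: "pochhammer (x - of_nat i) i * pochhammer x m = pochhammer (x - of_nat i) (i + m)"
    using pochhammer_product'[of "x - of_nat i" i m] by simp
  have "m - i + 2*i = i + m" using assms by simp
  then show ?thesis unfolding r1 r2 using p1 p2 by (simp add: mult_ac)
qed

lemma I1:
  fixes a b c :: complex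
  assumes hb: "1 + a - b \<notin> \<int>\<^sub>\<le>\<^sub>0" and hc: "1 + a - c \<notin> \<int>\<^sub>\<le>\<^sub>0"
  shows "(\<Sum>i=0..n. (-1)^i * pochhammer a (n+i) * pochhammer (1+a-b-c) i
            / (fact i * fact (n-i) * pochhammer (1+a-b) i * pochhammer (1+a-c) i))
       = pochhammer a n * pochhammer b n * pochhammer c n / (fact n * pochhammer (1+a-b) n * pochhammer (1+a-c) n)"
proof -
  define K where "K = pochhammer a n / (fact n * pochhammer (1+a-b) n * pochhammer (1+a-c) n)"
  have Cnz: "\<And>t. (1+a-b) + of_nat t \<noteq> 0"
  proof
    fix t assume "(1+a-b) + of_nat t = 0"
    then have "1+a-b = - of_nat t" by (simp add: eq_neg_iff_add_eq_0)
    then show False using hb by simp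
  qed
  have S: "(\<Sum>i=0..n. of_nat (n choose i) * pochhammer (a + of_nat n) i * pochhammer (1+a-b-c) i
        * pochhammer ((1+a-b) + of_nat i) (n-i) * pochhammer ((1+a-b)-(a + of_nat n)-(1+a-b-c)) (n-i))
     = pochhammer ((1+a-b)-(a + of_nat n)) n * pochhammer ((1+a-b)-(1+a-b-c)) n"
    by (rule saal[OF Cnz])
  have rhs: "pochhammer ((1+a-b)-(a + of_nat n)) n * pochhammer ((1+a-b)-(1+a-b-c)) n = (-1)^n * pochhammer b n * pochhammer c n"
  proof -
    have "pochhammer ((1+a-b)-(a + of_nat n)) n = (-1)^n * pochhammer b n"
      using pochhammer_minus[of "b + of_nat n - 1" n] by (simp add: algebra_simps)
    then show ?thesis by simp
  qed
  have tm: "(-1)^i * pochhammer a (n+i) * pochhammer (1+a-b-c) i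
            / (fact i * fact (n-i) * pochhammer (1+a-b) i * pochhammer (1+a-c) i)
      = K * (-1)^n * (of_nat (n choose i) * pochhammer (a + of_nat n) i * pochhammer (1+a-b-c) i
        * pochhammer ((1+a-b) + of_nat i) (n-i) * pochhammer ((1+a-b)-(a + of_nat n)-(1+a-b-c)) (n-i))"
    if i: "i \<le> n" for i
  proof -
    have h1: "pochhammer (1+a-b) n = pochhammer (1+a-b) i * pochhammer ((1+a-b) + of_nat i) (n-i)"
      by (rule pochhammer_product[OF i])
    have h2: "pochhammer (1+a-c) n = pochhammer (1+a-c) i * pochhammer ((1+a-c) + of_nat i) (n-i)"
      by (rule pochhammer_product[OF i])
    have h3: "pochhammer ((1+a-b)-(a + of_nat n)-(1+a-b-c)) (n-i) = (-1)^(n-i) * pochhammer ((1+a-c) + of_nat i) (n-i)"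
    proof -
      have e: "(1+a-b)-(a + of_nat n)-(1+a-b-c) = - (a + of_nat n - c)" by simp
      have e2: "a + of_nat n - c - of_nat (n-i) + 1 = (1+a-c) + of_nat i" using i by (simp add: of_nat_diff)
      show ?thesis unfolding e pochhammer_minus e2 by (rule refl)
    qed
    have h4: "of_nat (n choose i) = (fact n / (fact i * fact (n-i)) :: complex)" by (rule binomial_fact[OF i])
    have h5: "pochhammer a (n+i) = pochhammer a n * pochhammer (a + of_nat n) i" by (rule pochhammer_product')
    have h6: "(-1::complex)^n = (-1)^i * (-1)^(n-i)" using i by (simp flip: power_add)
    have nz1: "pochhammer (1+a-b) i \<noteq> 0" "pochhammer ((1+a-b) + of_nat i) (n-i) \<noteq> 0"
      using nz_poch[OF hb, of 0] nz_poch[OF hb, of i] by auto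
    have nz2: "pochhammer (1+a-c) i \<noteq> 0" "pochhammer ((1+a-c) + of_nat i) (n-i) \<noteq> 0"
      using nz_poch[OF hc, of 0] nz_poch[OF hc, of i] by auto
    have nzf: "(fact i :: complex) \<noteq> 0" "(fact (n-i) :: complex) \<noteq> 0" "(fact n :: complex) \<noteq> 0" by auto
    show ?thesis unfolding K_def h1 h2 h3 h4 h5 h6
      using nz1 nz2 nzf by (simp add: divide_simps)
  qed
  have "(\<Sum>i=0..n. (-1)^i * pochhammer a (n+i) * pochhammer (1+a-b-c) i
            / (fact i * fact (n-i) * pochhammer (1+a-b) i * pochhammer (1+a-c) i))
     = K * (-1)^n * (\<Sum>i=0..n. of_nat (n choose i) * pochhammer (a + of_nat n) i * pochhammer (1+a-b-c) i
        * pochhammer ((1+a-b) + of_nat i) (n-i) * pochhammer ((1+a-b)-(a + of_nat n)-(1+a-b-c)) (n-i))"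
    unfolding sum_distrib_left using tm by (intro sum.cong) auto
  also have "\<dots> = K * pochhammer b n * pochhammer c n"
    unfolding S rhs by (simp flip: power_add add: mult_2[symmetric] power_mult)
  finally show ?thesis unfolding K_def by simp
qed

lemma base:
  fixes a b c w :: complex and m :: nat
  assumes hb: "1 + a - b \<notin> \<int>\<^sub>\<le>\<^sub>0" and hc: "1 + a - c \<notin> \<int>\<^sub>\<le>\<^sub>0"
    and hw: "w \<notin> \<int>\<^sub>\<le>\<^sub>0"
    and hq: "\<And>t. t < 2*m \<Longrightarrow> 1 + a - w - of_nat m + of_nat t \<noteq> 0"
  shows "pochhammer (w-a) m * (\<Sum>i=0..m. pochhammer (1+a-b-c) i * pochhammer a (2*i) * pochhammer (1+a-w) i
            * pochhammer (- of_nat m) i / (fact i * pochhammer (1+a-b) i * pochhammer (1+a-c) i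
            * pochhammer (1+a-w-of_nat m) (2*i)))
       = pochhammer w m * (\<Sum>n=0..m. pochhammer a n * pochhammer b n * pochhammer c n * pochhammer (- of_nat m) n
            / (fact n * pochhammer (1+a-b) n * pochhammer (1+a-c) n * pochhammer w n))"
proof -
  define xx where "xx = 1+a-b-c"
  define T where "T = (\<lambda>n i. (-1)^i * pochhammer a (n+i) * pochhammer xx i
            / (fact i * fact (n-i) * pochhammer (1+a-b) i * pochhammer (1+a-c) i) :: complex)"
  define V where "V = (\<lambda>i. (-1)^i * pochhammer a (2*i) * pochhammer xx i * pochhammer (- of_nat m) i
            / (fact i * pochhammer (1+a-b) i * pochhammer (1+a-c) i) :: complex)"
  have wnz: "pochhammer (w + of_nat j) n \<noteq> 0" for j n using nz_poch[OF hw] by blast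
  have wnz0: "pochhammer w n \<noteq> 0" for n using wnz[of 0] by simp
  have bnz: "pochhammer (1+a-b) n \<noteq> 0" for n using nz_poch[OF hb, of 0] by simp
  have cnz: "pochhammer (1+a-c) n \<noteq> 0" for n using nz_poch[OF hc, of 0] by simp
  have s1: "(\<Sum>n=0..m. pochhammer a n * pochhammer b n * pochhammer c n * pochhammer (- of_nat m) n
            / (fact n * pochhammer (1+a-b) n * pochhammer (1+a-c) n * pochhammer w n))
      = (\<Sum>n=0..m. \<Sum>i=0..n. T n i * pochhammer (- of_nat m) n / pochhammer w n)"
  proof (intro sum.cong refl)
    fix n
    have "pochhammer a n * pochhammer b n * pochhammer c n * pochhammer (- of_nat m) n
            / (fact n * pochhammer (1+a-b) n * pochhammer (1+a-c) n * pochhammer w n)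
        = (pochhammer a n * pochhammer b n * pochhammer c n / (fact n * pochhammer (1+a-b) n * pochhammer (1+a-c) n))
           * pochhammer (- of_nat m) n / pochhammer w n" by simp
    also have "\<dots> = (\<Sum>i=0..n. T n i) * pochhammer (- of_nat m) n / pochhammer w n"
      unfolding T_def xx_def using I1[OF hb hc, of n] by simp
    finally show "pochhammer a n * pochhammer b n * pochhammer c n * pochhammer (- of_nat m) n
            / (fact n * pochhammer (1+a-b) n * pochhammer (1+a-c) n * pochhammer w n)
        = (\<Sum>i=0..n. T n i * pochhammer (- of_nat m) n / pochhammer w n)"
      by (simp add: sum_distrib_right sum_divide_distrib)
  qed
  also have "\<dots> = (\<Sum>i=0..m. \<Sum>n=i..m. T n i * pochhammer (- of_nat m) n / pochhammer w n)"
    by (rule swap_tri)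
  also have "\<dots> = (\<Sum>i=0..m. V i * pochhammer (w - a - of_nat i) (m-i) / pochhammer w m)"
  proof (intro sum.cong refl)
    fix i assume "i \<in> {0..m}"
    then have im: "i \<le> m" by simp
    have sh: "(\<Sum>n=i..m. T n i * pochhammer (- of_nat m) n / pochhammer w n)
        = (\<Sum>p=0..m-i. T (p+i) i * pochhammer (- of_nat m) (p+i) / pochhammer w (p+i))"
      using sum.shift_bounds_cl_nat_ivl[of "\<lambda>n. T n i * pochhammer (- of_nat m) n / pochhammer w n" 0 i "m-i"] im
      by simp
    have tm: "T (p+i) i * pochhammer (- of_nat m) (p+i) / pochhammer w (p+i)
        = V i / pochhammer w i * (pochhammer (a + of_nat (2*i)) p * pochhammer (- of_nat (m-i)) p
            / (of_nat (fact p) * pochhammer (w + of_nat i) p))" for p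
    proof -
      have "p+i+i = 2*i + p" by simp
      then have f1: "pochhammer a (p+i+i) = pochhammer a (2*i) * pochhammer (a + of_nat (2*i)) p"
        by (simp only: pochhammer_product')
      have em: "- of_nat m + of_nat i = - (of_nat (m-i) :: complex)" using im by (simp add: of_nat_diff)
      have f2: "(pochhammer (- of_nat m) (p+i) :: complex) = pochhammer (- of_nat m) i * pochhammer (- of_nat (m-i)) p"
        unfolding em[symmetric] using pochhammer_product'[of "- of_nat m" i p] by (simp only: add.commute[of p i])
      have f3: "pochhammer w (p+i) = pochhammer w i * pochhammer (w + of_nat i) p"
        using pochhammer_product'[of w i p] by (simp only: add.commute[of p i])
      have f4: "p + i - i = p" by simp
      show ?thesis unfolding T_def V_def f1 f2 f3 f4 of_nat_fact
        using wnz0[of i] wnz[of i p] bnz[of i] cnz[of i] by (simp add: divide_simps)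
    qed
    have vd: "(\<Sum>p=0..m-i. pochhammer (a + of_nat (2*i)) p * pochhammer (- of_nat (m-i)) p
            / (of_nat (fact p) * pochhammer (w + of_nat i) p))
        = pochhammer ((w + of_nat i) - (a + of_nat (2*i))) (m-i) / pochhammer (w + of_nat i) (m-i)"
    proof (rule Vandermonde_pochhammer)
      show "\<forall>t\<in>{0..<m-i}. w + of_nat i \<noteq> - of_nat t"
      proof
        fix t assume "t \<in> {0..<m-i}"
        have "pochhammer (w + of_nat i) (Suc t) \<noteq> 0" by (rule wnz)
        then show "w + of_nat i \<noteq> - of_nat t" by (auto simp: pochhammer_eq_0_iff)
      qed
    qed
    have e: "(w + of_nat i) - (a + of_nat (2*i)) = w - a - of_nat i" by simp
    have pw: "pochhammer w m = pochhammer w i * pochhammer (w + of_nat i) (m-i)"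
      by (rule pochhammer_product[OF im])
    show "(\<Sum>n=i..m. T n i * pochhammer (- of_nat m) n / pochhammer w n)
        = V i * pochhammer (w - a - of_nat i) (m-i) / pochhammer w m"
      unfolding sh tm sum_distrib_left[symmetric] vd e pw
      using wnz0[of i] wnz[of i "m-i"] by (simp add: divide_simps)
  qed
  finally have R: "pochhammer w m * (\<Sum>n=0..m. pochhammer a n * pochhammer b n * pochhammer c n * pochhammer (- of_nat m) n
            / (fact n * pochhammer (1+a-b) n * pochhammer (1+a-c) n * pochhammer w n))
      = (\<Sum>i=0..m. V i * pochhammer (w - a - of_nat i) (m-i))"
    using wnz0[of m] by (simp add: sum_distrib_left)
  have L: "pochhammer (w-a) m * (pochhammer (1+a-b-c) i * pochhammer a (2*i) * pochhammer (1+a-w) i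
            * pochhammer (- of_nat m) i / (fact i * pochhammer (1+a-b) i * pochhammer (1+a-c) i
            * pochhammer (1+a-w-of_nat m) (2*i)))
         = V i * pochhammer (w - a - of_nat i) (m-i)" if "i \<in> {0..m}" for i
  proof -
    have im: "i \<le> m" using that by simp
    have qnz: "pochhammer (1+a-w-of_nat m) (2*i) \<noteq> 0"
    proof
      assume "pochhammer (1+a-w-of_nat m) (2*i) = 0"
      then obtain t where t: "t < 2*i" "1+a-w-of_nat m = - of_nat t" by (auto simp: pochhammer_eq_0_iff)
      then have "1 + a - w - of_nat m + of_nat t = 0" by simp
      moreover have "t < 2*m" using t im by simp
      ultimately show False using hq by blast
    qed
    have e1: "1 - (w-a) - of_nat m = 1 + a - w - of_nat m" by simp
    have e2: "1 - (w - a) = 1 + a - w" by simp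
    have l3: "(-1)^i * pochhammer (w - a - of_nat i) (m-i) * pochhammer (1 + a - w - of_nat m) (2*i)
          = pochhammer (1 + a - w) i * pochhammer (w - a) m"
      using L3[OF im, of "w - a"] by (simp only: e1 e2)
    have sq: "((-1::complex)^i) * (-1)^i = 1" by (simp flip: power_add add: mult_2[symmetric] power_mult)
    have k: "pochhammer (1 + a - w) i * pochhammer (w - a) m / pochhammer (1 + a - w - of_nat m) (2*i)
        = (-1)^i * pochhammer (w - a - of_nat i) (m-i)"
      using l3 qnz by (simp add: divide_simps)
    define Z where "Z = pochhammer (1+a-b-c) i * pochhammer a (2*i) * pochhammer (- of_nat m) i
            / (fact i * pochhammer (1+a-b) i * pochhammer (1+a-c) i)"
    have "pochhammer (w-a) m * (pochhammer (1+a-b-c) i * pochhammer a (2*i) * pochhammer (1+a-w) i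
            * pochhammer (- of_nat m) i / (fact i * pochhammer (1+a-b) i * pochhammer (1+a-c) i
            * pochhammer (1+a-w-of_nat m) (2*i)))
       = Z * (pochhammer (1 + a - w) i * pochhammer (w - a) m / pochhammer (1 + a - w - of_nat m) (2*i))"
      unfolding Z_def by (simp add: ac_simps)
    also have "\<dots> = Z * ((-1)^i * pochhammer (w - a - of_nat i) (m-i))" unfolding k ..
    also have "\<dots> = V i * pochhammer (w - a - of_nat i) (m-i)"
      unfolding V_def Z_def xx_def by (simp add: ac_simps)
    finally show ?thesis .
  qed
  have "pochhammer (w-a) m * (\<Sum>i=0..m. pochhammer (1+a-b-c) i * pochhammer a (2*i) * pochhammer (1+a-w) i
            * pochhammer (- of_nat m) i / (fact i * pochhammer (1+a-b) i * pochhammer (1+a-c) i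
            * pochhammer (1+a-w-of_nat m) (2*i)))
      = (\<Sum>i=0..m. V i * pochhammer (w - a - of_nat i) (m-i))"
    unfolding sum_distrib_left using L by (intro sum.cong) auto
  also note R[symmetric]
  finally show ?thesis .
qed

lemma shift_sum:
  fixes f :: "nat \<Rightarrow> complex"
  assumes "\<And>l. l < j \<Longrightarrow> f l = 0" and "j \<le> m"
  shows "(\<Sum>l=0..m. f l) = (\<Sum>i=0..m-j. f (i+j))"
proof -
  have "(\<Sum>l=0..m. f l) = (\<Sum>l=j..m. f l)"
    using assms(1) by (intro sum.mono_neutral_right) auto
  also have "\<dots> = (\<Sum>i=0..m-j. f (i+j))"
    using sum.shift_bounds_cl_nat_ivl[of f 0 j "m-j"] assms(2) by simp
  finally show ?thesis .
qed

lemma notnp_shift: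
  fixes z :: complex
  assumes "z \<notin> \<int>\<^sub>\<le>\<^sub>0"
  shows "z + of_nat j \<notin> \<int>\<^sub>\<le>\<^sub>0"
proof
  assume "z + of_nat j \<in> \<int>\<^sub>\<le>\<^sub>0"
  then have "(z + of_nat j) - of_nat j \<in> \<int>\<^sub>\<le>\<^sub>0"
    by (intro nonpos_Ints_diff_Nats) auto
  then show False using assms by simp
qed

lemma J:
  fixes a b c w :: complex and m j :: nat
  assumes hb: "1 + a - b \<notin> \<int>\<^sub>\<le>\<^sub>0" and hc: "1 + a - c \<notin> \<int>\<^sub>\<le>\<^sub>0"
    and hw: "w \<notin> \<int>\<^sub>\<le>\<^sub>0" and hB: "b \<notin> \<int>\<^sub>\<le>\<^sub>0" and hC: "c \<notin> \<int>\<^sub>\<le>\<^sub>0"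
    and hq: "\<And>t. t < 2*m \<Longrightarrow> 1 + a - w - of_nat m + of_nat t \<noteq> 0"
    and jm: "j \<le> m"
  shows "pochhammer (w-a) m * (\<Sum>l=0..m. pochhammer a (2*l) * of_nat (l choose j) * pochhammer (1+a-b-c) (l-j)
            * pochhammer (1+a-w) l * pochhammer (- of_nat m) l / (fact l * pochhammer (1+a-b) l * pochhammer (1+a-c) l
            * pochhammer (1+a-w-of_nat m) (2*l)))
       = pochhammer w m * (\<Sum>n=0..m. pochhammer a n * pochhammer b n * pochhammer c n * pochhammer (- of_nat m) n
            / (fact n * pochhammer (1+a-b) n * pochhammer (1+a-c) n * pochhammer w n)
            * (pochhammer (- of_nat n) j * pochhammer (of_nat n + a) j / (fact j * pochhammer b j * pochhammer c j)))"
proof -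
  define mm where "mm = m - j"
  have mmj: "m = j + mm" unfolding mm_def using jm by simp
  define x where "x = 1 + a - b - c"
  define Q where "Q = 1 + a - w - of_nat m"
  have qnz: "pochhammer Q (2*l + 2*i) \<noteq> 0" if "l + i \<le> m" for l i
  proof
    assume "pochhammer Q (2*l + 2*i) = 0"
    then obtain t where t: "t < 2*l + 2*i" "Q = - of_nat t" by (auto simp: pochhammer_eq_0_iff)
    then have "1 + a - w - of_nat m + of_nat t = 0" unfolding Q_def by simp
    moreover have "t < 2*m" using t that by simp
    ultimately show False using hq by blast
  qed
  have bnz: "pochhammer (1+a-b + of_nat k) n \<noteq> 0" for k n using nz_poch[OF hb] by blast
  have cnz: "pochhammer (1+a-c + of_nat k) n \<noteq> 0" for k n using nz_poch[OF hc] by blast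
  have wnz: "pochhammer (w + of_nat k) n \<noteq> 0" for k n using nz_poch[OF hw] by blast
  have Bnz: "pochhammer (b + of_nat k) n \<noteq> 0" for k n using nz_poch[OF hB] by blast
  have Cnz: "pochhammer (c + of_nat k) n \<noteq> 0" for k n using nz_poch[OF hC] by blast
  have bnz0: "pochhammer (1+a-b) n \<noteq> 0" for n using bnz[of 0] by simp
  have cnz0: "pochhammer (1+a-c) n \<noteq> 0" for n using cnz[of 0] by simp
  have wnz0: "pochhammer w n \<noteq> 0" for n using wnz[of 0] by simp
  have Bnz0: "pochhammer b n \<noteq> 0" for n using Bnz[of 0] by simp
  have Cnz0: "pochhammer c n \<noteq> 0" for n using Cnz[of 0] by simp
  note B0 = base[of "a + of_nat (2*j)" "b + of_nat j" "c + of_nat j" "w + of_nat j" mm]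
  have pa1: "1 + (a + of_nat (2*j)) - (b + of_nat j) - (c + of_nat j) = x" unfolding x_def by simp
  have pa2: "1 + (a + of_nat (2*j)) - (w + of_nat j) = (1 + a - w) + of_nat j" by simp
  have pa3: "1 + (a + of_nat (2*j)) - (b + of_nat j) = (1 + a - b) + of_nat j" by simp
  have pa4: "1 + (a + of_nat (2*j)) - (c + of_nat j) = (1 + a - c) + of_nat j" by simp
  have pa5: "1 + (a + of_nat (2*j)) - (w + of_nat j) - of_nat mm = Q + of_nat (2*j)" unfolding Q_def mmj by simp
  have pa6: "(w + of_nat j) - (a + of_nat (2*j)) = w - a - of_nat j" by simp
  have pa7: "- (of_nat mm :: complex) = - of_nat m + of_nat j" unfolding mmj by simp
  define g where "g = (\<lambda>i. pochhammer x i * pochhammer (a + of_nat (2*j)) (2*i) * pochhammer ((1 + a - w) + of_nat j) i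
            * pochhammer (- of_nat m + of_nat j) i / (fact i * pochhammer ((1 + a - b) + of_nat j) i
            * pochhammer ((1 + a - c) + of_nat j) i * pochhammer (Q + of_nat (2*j)) (2*i)))"
  define r where "r = (\<lambda>i. pochhammer (a + of_nat (2*j)) i * pochhammer (b + of_nat j) i * pochhammer (c + of_nat j) i
            * pochhammer (- of_nat m + of_nat j) i
            / (fact i * pochhammer ((1 + a - b) + of_nat j) i * pochhammer ((1 + a - c) + of_nat j) i * pochhammer (w + of_nat j) i))"
  have B: "pochhammer (w - a - of_nat j) mm * (\<Sum>i=0..mm. g i) = pochhammer (w + of_nat j) mm * (\<Sum>i=0..mm. r i)"
  proof -
    have h1: "1 + a - b + of_nat j \<notin> \<int>\<^sub>\<le>\<^sub>0" by (rule notnp_shift[OF hb])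
    have h2: "1 + a - c + of_nat j \<notin> \<int>\<^sub>\<le>\<^sub>0" by (rule notnp_shift[OF hc])
    have h3: "w + of_nat j \<notin> \<int>\<^sub>\<le>\<^sub>0" by (rule notnp_shift[OF hw])
    have h4: "1 + (a + of_nat (2*j)) - (w + of_nat j) - of_nat mm + of_nat t \<noteq> 0" if "t < 2*mm" for t
    proof -
      have ne: "1 + a - w - of_nat m + of_nat (2*j + t) \<noteq> 0" using hq[of "2*j+t"] that mmj by simp
      have eq: "1 + (a + of_nat (2*j)) - (w + of_nat j) - of_nat mm + of_nat t = 1 + a - w - of_nat m + of_nat (2*j + t)"
        unfolding mmj by simp
      show ?thesis unfolding eq by (rule ne)
    qed
    have h5: "1 + (a + of_nat (2*j)) - (b + of_nat j) \<notin> \<int>\<^sub>\<le>\<^sub>0" unfolding pa3 by (rule h1)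
    have h6: "1 + (a + of_nat (2*j)) - (c + of_nat j) \<notin> \<int>\<^sub>\<le>\<^sub>0" unfolding pa4 by (rule h2)
    note BB = B0[OF h5 h6 h3 h4]
    show ?thesis unfolding g_def r_def using BB unfolding pa1 pa5 pa6 pa7 unfolding pa2 pa3 pa4 .
  qed
  define fL where "fL = (\<lambda>l. pochhammer a (2*l) * of_nat (l choose j) * pochhammer x (l-j)
            * pochhammer (1+a-w) l * pochhammer (- of_nat m) l / (fact l * pochhammer (1+a-b) l * pochhammer (1+a-c) l
            * pochhammer Q (2*l)))"
  define K1 where "K1 = pochhammer a (2*j) * pochhammer (1+a-w) j * pochhammer (- of_nat m) j
            / (fact j * pochhammer (1+a-b) j * pochhammer (1+a-c) j * pochhammer Q (2*j))"
  have fLs: "fL (i+j) = K1 * g i" if im: "i \<le> mm" for i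
  proof -
    have e_a: "pochhammer a (2*(i+j)) = pochhammer a (2*j) * pochhammer (a + of_nat (2*j)) (2*i)"
      using pochhammer_product'[of a "2*j" "2*i"] by (simp add: algebra_simps)
    have e_ch: "of_nat ((i+j) choose j) = (fact (i+j) / (fact j * fact i) :: complex)"
      using binomial_fact[of j "i+j"] by simp
    have e_x: "i + j - j = i" by simp
    have e_w: "pochhammer (1+a-w) (i+j) = pochhammer (1+a-w) j * pochhammer ((1+a-w) + of_nat j) i"
      using pochhammer_product'[of "1+a-w" j i] by (simp only: add.commute[of j i])
    have e_m: "pochhammer (- of_nat m) (i+j) = pochhammer (- of_nat m) j * pochhammer (- of_nat m + of_nat j) i"
      using pochhammer_product'[of "- of_nat m" j i] by (simp only: add.commute[of j i])
    have e_b: "pochhammer (1+a-b) (i+j) = pochhammer (1+a-b) j * pochhammer ((1+a-b) + of_nat j) i"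
      using pochhammer_product'[of "1+a-b" j i] by (simp only: add.commute[of j i])
    have e_c: "pochhammer (1+a-c) (i+j) = pochhammer (1+a-c) j * pochhammer ((1+a-c) + of_nat j) i"
      using pochhammer_product'[of "1+a-c" j i] by (simp only: add.commute[of j i])
    have e_q: "pochhammer Q (2*(i+j)) = pochhammer Q (2*j) * pochhammer (Q + of_nat (2*j)) (2*i)"
      using pochhammer_product'[of Q "2*j" "2*i"] by (simp add: algebra_simps)
    have q1: "pochhammer Q (2*j) \<noteq> 0" using qnz[of j 0] jm by simp
    have q2: "pochhammer (Q + of_nat (2*j)) (2*i) \<noteq> 0"
      using qnz[of j i] im mmj e_q by (simp add: algebra_simps)
    have nzs: "(fact i :: complex) \<noteq> 0" "(fact j :: complex) \<noteq> 0" "(fact (i+j) :: complex) \<noteq> 0" by auto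
    show ?thesis unfolding fL_def K1_def g_def e_a e_ch e_x e_w e_m e_b e_c e_q
      using q1 q2 nzs bnz0[of j] cnz0[of j] bnz[of j i] cnz[of j i] by (simp add: divide_simps ac_simps)
  qed
  define fR where "fR = (\<lambda>n. pochhammer a n * pochhammer b n * pochhammer c n * pochhammer (- of_nat m) n
            / (fact n * pochhammer (1+a-b) n * pochhammer (1+a-c) n * pochhammer w n)
            * (pochhammer (- of_nat n) j * pochhammer (of_nat n + a) j / (fact j * pochhammer b j * pochhammer c j)))"
  define K2 where "K2 = (-1)^j * pochhammer a (2*j) * pochhammer (- of_nat m) j
            / (fact j * pochhammer (1+a-b) j * pochhammer (1+a-c) j * pochhammer w j)"
  have fRs: "fR (i+j) = K2 * r i" for i
  proof -
    have s1: "fR (i+j) = (pochhammer a (i+j) * pochhammer (of_nat (i+j) + a) j) * (pochhammer b (i+j) * pochhammer c (i+j)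
        * pochhammer (- of_nat m) (i+j) * pochhammer (- of_nat (i+j)) j)
        / (fact (i+j) * pochhammer (1+a-b) (i+j) * pochhammer (1+a-c) (i+j) * pochhammer w (i+j) * (fact j * pochhammer b j * pochhammer c j))"
      unfolding fR_def by (simp only: times_divide_times_eq mult_ac)
    have r_a: "pochhammer a (i+j) * pochhammer (of_nat (i+j) + a) j = pochhammer a (2*j) * pochhammer (a + of_nat (2*j)) i"
    proof -
      have h1: "pochhammer a (i+j) * pochhammer (of_nat (i+j) + a) j = pochhammer a (i+j+j)"
        using pochhammer_product'[of a "i+j" j] by (simp add: add.commute)
      have h2: "i+j+j = 2*j + i" by simp
      have h3: "pochhammer a (2*j + i) = pochhammer a (2*j) * pochhammer (a + of_nat (2*j)) i" by (rule pochhammer_product')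
      show ?thesis using h1 unfolding h2 h3 .
    qed
    have r_n: "pochhammer (- of_nat (i+j)) j = (-1)^j * fact (i+j) / (fact i :: complex)"
    proof -
      have "pochhammer (- of_nat (i+j)) j = (-1)^j * pochhammer (of_nat (i+j) - of_nat j + 1 :: complex) j"
        by (rule pochhammer_minus)
      also have "(of_nat (i+j) - of_nat j + 1 :: complex) = 1 + of_nat i" by simp
      also have "fact (i+j) = fact i * (pochhammer (1 + of_nat i) j :: complex)"
        using pochhammer_product'[of "1::complex" i j] by (simp add: pochhammer_fact)
      ultimately show ?thesis by simp
    qed
    have r_b: "pochhammer b (i+j) = pochhammer b j * pochhammer (b + of_nat j) i"
      using pochhammer_product'[of b j i] by (simp only: add.commute[of j i])
    have r_c: "pochhammer c (i+j) = pochhammer c j * pochhammer (c + of_nat j) i"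
      using pochhammer_product'[of c j i] by (simp only: add.commute[of j i])
    have r_m: "pochhammer (- of_nat m) (i+j) = pochhammer (- of_nat m) j * pochhammer (- of_nat m + of_nat j) i"
      using pochhammer_product'[of "- of_nat m" j i] by (simp only: add.commute[of j i])
    have r_w: "pochhammer w (i+j) = pochhammer w j * pochhammer (w + of_nat j) i"
      using pochhammer_product'[of w j i] by (simp only: add.commute[of j i])
    have e_b: "pochhammer (1+a-b) (i+j) = pochhammer (1+a-b) j * pochhammer ((1+a-b) + of_nat j) i"
      using pochhammer_product'[of "1+a-b" j i] by (simp only: add.commute[of j i])
    have e_c: "pochhammer (1+a-c) (i+j) = pochhammer (1+a-c) j * pochhammer ((1+a-c) + of_nat j) i"
      using pochhammer_product'[of "1+a-c" j i] by (simp only: add.commute[of j i])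
    have nzs: "(fact i :: complex) \<noteq> 0" "(fact j :: complex) \<noteq> 0" "(fact (i+j) :: complex) \<noteq> 0" by auto
    show ?thesis unfolding s1 r_a r_n r_b r_c r_m r_w e_b e_c K2_def r_def
      using nzs bnz0[of j] cnz0[of j] bnz[of j i] cnz[of j i] wnz0[of j] wnz[of j i] Bnz0[of j] Cnz0[of j]
      by (simp add: divide_simps ac_simps)
  qed
  have Lz: "fL l = 0" if "l < j" for l
    unfolding fL_def using that by (simp add: binomial_eq_0)
  have Rz: "fR n = 0" if "n < j" for n
    unfolding fR_def using that by (simp add: pochhammer_of_nat_eq_0_lemma)
  have LS: "(\<Sum>l=0..m. fL l) = K1 * (\<Sum>i=0..mm. g i)"
  proof -
    have "(\<Sum>l=0..m. fL l) = (\<Sum>i=0..m-j. fL (i+j))" by (rule shift_sum[OF Lz jm])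
    also have "\<dots> = (\<Sum>i=0..mm. K1 * g i)" unfolding mm_def[symmetric] using fLs by (intro sum.cong) auto
    also have "\<dots> = K1 * (\<Sum>i=0..mm. g i)" by (simp add: sum_distrib_left)
    finally show ?thesis .
  qed
  have RS: "(\<Sum>l=0..m. fR l) = K2 * (\<Sum>i=0..mm. r i)"
  proof -
    have "(\<Sum>l=0..m. fR l) = (\<Sum>i=0..m-j. fR (i+j))" by (rule shift_sum[OF Rz jm])
    also have "\<dots> = (\<Sum>i=0..mm. K2 * r i)" unfolding mm_def[symmetric] using fRs by (intro sum.cong) auto
    also have "\<dots> = K2 * (\<Sum>i=0..mm. r i)" by (simp add: sum_distrib_left)
    finally show ?thesis .
  qed
  define M where "M = (-1)^j * pochhammer a (2*j) * pochhammer (- of_nat m) j / (fact j * pochhammer (1+a-b) j * pochhammer (1+a-c) j)"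
  have c1: "pochhammer (w-a) m * K1 = M * pochhammer (w - a - of_nat j) mm"
  proof -
    have e1: "1 + a - w - of_nat m = Q" unfolding Q_def by simp
    have e2: "1 - (w - a) = 1 + a - w" by simp
    have l3: "(-1)^j * pochhammer (w - a - of_nat j) mm * pochhammer Q (2*j)
          = pochhammer (1 + a - w) j * pochhammer (w - a) m"
      using L3[OF jm, of "w - a"] unfolding mm_def by (simp only: e1 e2)
    have q1: "pochhammer Q (2*j) \<noteq> 0" using qnz[of j 0] jm by simp
    have k: "pochhammer (1 + a - w) j * pochhammer (w - a) m / pochhammer Q (2*j)
        = (-1)^j * pochhammer (w - a - of_nat j) mm"
      using l3 q1 by (simp add: divide_simps)
    define Z where "Z = pochhammer a (2*j) * pochhammer (- of_nat m) j / (fact j * pochhammer (1+a-b) j * pochhammer (1+a-c) j)"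
    have "pochhammer (w-a) m * K1 = Z * (pochhammer (1 + a - w) j * pochhammer (w - a) m / pochhammer Q (2*j))"
      unfolding Z_def K1_def by (simp add: ac_simps)
    also have "\<dots> = Z * ((-1)^j * pochhammer (w - a - of_nat j) mm)" unfolding k ..
    also have "\<dots> = M * pochhammer (w - a - of_nat j) mm"
      unfolding M_def Z_def by (simp add: ac_simps)
    finally show ?thesis .
  qed
  have c2: "pochhammer w m * K2 = M * pochhammer (w + of_nat j) mm"
  proof -
    have pw: "pochhammer w m = pochhammer w j * pochhammer (w + of_nat j) mm"
      unfolding mm_def by (rule pochhammer_product[OF jm])
    show ?thesis unfolding pw K2_def M_def using wnz0[of j] by (simp add: divide_simps ac_simps)
  qed
  have "pochhammer (w-a) m * (\<Sum>l=0..m. fL l) = pochhammer w m * (\<Sum>n=0..m. fR n)"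
  proof -
    have "pochhammer (w-a) m * (\<Sum>l=0..m. fL l) = (pochhammer (w-a) m * K1) * (\<Sum>i=0..mm. g i)"
      unfolding LS by (simp only: mult.assoc)
    also have "\<dots> = M * (pochhammer (w - a - of_nat j) mm * (\<Sum>i=0..mm. g i))"
      unfolding c1 by (simp only: mult.assoc)
    also have "\<dots> = M * (pochhammer (w + of_nat j) mm * (\<Sum>i=0..mm. r i))"
      unfolding B ..
    also have "\<dots> = (pochhammer w m * K2) * (\<Sum>i=0..mm. r i)"
      unfolding c2 by (simp only: mult.assoc)
    also have "\<dots> = pochhammer w m * (\<Sum>n=0..m. fR n)"
      unfolding RS by (simp only: mult.assoc)
    finally show ?thesis .
  qed
  then show ?thesis unfolding fL_def fR_def x_def Q_def .
qed

lemma assemble: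
  fixes a b c w :: complex and m :: nat and e U Qv :: "nat \<Rightarrow> complex"
  assumes hb: "1 + a - b \<notin> \<int>\<^sub>\<le>\<^sub>0" and hc: "1 + a - c \<notin> \<int>\<^sub>\<le>\<^sub>0"
    and hw: "w \<notin> \<int>\<^sub>\<le>\<^sub>0" and hB: "b \<notin> \<int>\<^sub>\<le>\<^sub>0" and hC: "c \<notin> \<int>\<^sub>\<le>\<^sub>0"
    and hwa: "w - a \<notin> \<int>\<^sub>\<le>\<^sub>0"
    and hq: "\<And>t. t < 2*m \<Longrightarrow> 1 + a - w - of_nat m + of_nat t \<noteq> 0"
    and U: "\<And>l. l \<le> m \<Longrightarrow> U l = (\<Sum>j=0..m. of_nat (l choose j) * e j * pochhammer (1+a-b-c) (l-j))"
    and Qe: "\<And>n. n \<le> m \<Longrightarrow> Qv n = (\<Sum>j=0..m. e j * (pochhammer (- of_nat n) j * pochhammer (of_nat n + a) j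
              / (fact j * pochhammer b j * pochhammer c j)))"
  shows "(\<Sum>l=0..m. pochhammer a (2*l) * U l * pochhammer (1+a-w) l * pochhammer (- of_nat m) l
            / (fact l * pochhammer (1+a-b) l * pochhammer (1+a-c) l * pochhammer (1+a-w-of_nat m) (2*l)))
       = pochhammer w m / pochhammer (w-a) m *
         (\<Sum>n=0..m. pochhammer a n * pochhammer b n * pochhammer c n * pochhammer (- of_nat m) n
            / (fact n * pochhammer (1+a-b) n * pochhammer (1+a-c) n * pochhammer w n) * Qv n)"
proof -
  define fL where "fL = (\<lambda>j l. pochhammer a (2*l) * of_nat (l choose j) * pochhammer (1+a-b-c) (l-j)
            * pochhammer (1+a-w) l * pochhammer (- of_nat m) l / (fact l * pochhammer (1+a-b) l * pochhammer (1+a-c) l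
            * pochhammer (1+a-w-of_nat m) (2*l)))"
  define R where "R = (\<lambda>n. pochhammer a n * pochhammer b n * pochhammer c n * pochhammer (- of_nat m) n
            / (fact n * pochhammer (1+a-b) n * pochhammer (1+a-c) n * pochhammer w n))"
  define fR where "fR = (\<lambda>j n. R n * (pochhammer (- of_nat n) j * pochhammer (of_nat n + a) j / (fact j * pochhammer b j * pochhammer c j)))"
  have wa: "pochhammer (w-a) m \<noteq> 0" using nz_poch[OF hwa, of 0] by simp
  have JJ: "pochhammer (w-a) m * (\<Sum>l=0..m. fL j l) = pochhammer w m * (\<Sum>n=0..m. fR j n)" if "j \<le> m" for j
    unfolding fL_def fR_def R_def by (rule J[OF hb hc hw hB hC hq that])
  have "pochhammer (w-a) m * (\<Sum>l=0..m. pochhammer a (2*l) * U l * pochhammer (1+a-w) l * pochhammer (- of_nat m) l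
            / (fact l * pochhammer (1+a-b) l * pochhammer (1+a-c) l * pochhammer (1+a-w-of_nat m) (2*l)))
      = pochhammer (w-a) m * (\<Sum>l=0..m. \<Sum>j=0..m. e j * fL j l)"
  proof -
    have "(\<Sum>l=0..m. pochhammer a (2*l) * U l * pochhammer (1+a-w) l * pochhammer (- of_nat m) l
            / (fact l * pochhammer (1+a-b) l * pochhammer (1+a-c) l * pochhammer (1+a-w-of_nat m) (2*l)))
      = (\<Sum>l=0..m. \<Sum>j=0..m. e j * fL j l)"
    proof (intro sum.cong refl)
      fix l assume "l \<in> {0..m}"
      then have "U l = (\<Sum>j=0..m. of_nat (l choose j) * e j * pochhammer (1+a-b-c) (l-j))" using U by simp
      then show "pochhammer a (2*l) * U l * pochhammer (1+a-w) l * pochhammer (- of_nat m) l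
            / (fact l * pochhammer (1+a-b) l * pochhammer (1+a-c) l * pochhammer (1+a-w-of_nat m) (2*l))
          = (\<Sum>j=0..m. e j * fL j l)"
        unfolding fL_def by (simp add: sum_distrib_left sum_distrib_right sum_divide_distrib ac_simps)
    qed
    then show ?thesis by simp
  qed
  also have "\<dots> = (\<Sum>j=0..m. e j * (pochhammer (w-a) m * (\<Sum>l=0..m. fL j l)))"
    by (subst sum.swap) (simp add: sum_distrib_left ac_simps)
  also have "\<dots> = (\<Sum>j=0..m. e j * (pochhammer w m * (\<Sum>n=0..m. fR j n)))"
    using JJ by (intro sum.cong) auto
  also have "\<dots> = pochhammer w m * (\<Sum>j=0..m. \<Sum>n=0..m. e j * fR j n)"
    by (simp add: sum_distrib_left ac_simps)
  also have "\<dots> = pochhammer w m * (\<Sum>n=0..m. \<Sum>j=0..m. e j * fR j n)"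
    by (subst sum.swap) (rule refl)
  also have "\<dots> = pochhammer w m * (\<Sum>n=0..m. R n * Qv n)"
  proof -
    have "(\<Sum>n=0..m. \<Sum>j=0..m. e j * fR j n) = (\<Sum>n=0..m. R n * Qv n)"
    proof (intro sum.cong refl)
      fix n assume "n \<in> {0..m}"
      then show "(\<Sum>j=0..m. e j * fR j n) = R n * Qv n"
        using Qe[of n] unfolding fR_def by (simp add: sum_distrib_left ac_simps)
    qed
    then show ?thesis by simp
  qed
  finally have "pochhammer (w-a) m * (\<Sum>l=0..m. pochhammer a (2*l) * U l * pochhammer (1+a-w) l * pochhammer (- of_nat m) l
            / (fact l * pochhammer (1+a-b) l * pochhammer (1+a-c) l * pochhammer (1+a-w-of_nat m) (2*l)))
      = pochhammer w m * (\<Sum>n=0..m. R n * Qv n)" .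
  then show ?thesis unfolding R_def using wa by (simp add: field_simps)
qed


theorem theorem11:
  fixes a b c d w :: complex and k m :: nat
  assumes "1 + a - b \<notin> \<int>\<^sub>\<le>\<^sub>0" and "1 + a - c \<notin> \<int>\<^sub>\<le>\<^sub>0"
    and "b \<notin> \<int>\<^sub>\<le>\<^sub>0" and "c \<notin> \<int>\<^sub>\<le>\<^sub>0"
    and "w \<notin> \<int>\<^sub>\<le>\<^sub>0" and "w - a \<notin> \<int>\<^sub>\<le>\<^sub>0"
    and "1/2 + (a - w - of_nat m) / 2 \<notin> \<int>\<^sub>\<le>\<^sub>0"
    and "1 + (a - w - of_nat m) / 2 \<notin> \<int>\<^sub>\<le>\<^sub>0"
  shows "hypF [a/2, 1/2 + a/2, 1 - of_nat k + a - b - c, 1 + a - w, - of_nat m]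
              [1 + a - b, 1 + a - c, 1/2 + (a - w - of_nat m)/2, 1 + (a - w - of_nat m)/2] m
         = pochhammer w m / pochhammer (w - a) m *
           (\<Sum>n=0..m. pochhammer a n * pochhammer b n * pochhammer c n * pochhammer (- of_nat m) n
              / (fact n * pochhammer (1 + a - b) n * pochhammer (1 + a - c) n * pochhammer w n)
              * Q2 k n a b c)
       \<and> (d \<notin> \<int>\<^sub>\<le>\<^sub>0 \<longrightarrow>
         hypF [a/2, 1/2 + a/2, 1 - of_nat k + a - b - c, of_nat k + d, 1 + a - w, - of_nat m]
              [1 + a - b, 1 + a - c, d, 1/2 + (a - w - of_nat m)/2, 1 + (a - w - of_nat m)/2] m
         = pochhammer w m / pochhammer (w - a) m *
           (\<Sum>n=0..m. pochhammer a n * pochhammer b n * pochhammer c n * pochhammer (- of_nat m) n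
              / (fact n * pochhammer (1 + a - b) n * pochhammer (1 + a - c) n * pochhammer w n)
              * Q2d k n a b c d))"
proof -
  note hb = assms(1) and hc = assms(2) and hB = assms(3) and hC = assms(4)
    and hw = assms(5) and hwa = assms(6) and h7 = assms(7) and h8 = assms(8)
  have nz1: "pochhammer (1/2 + (a - w - of_nat m)/2) l \<noteq> 0" for l using nz_poch[OF h7, of 0] by simp
  have nz2: "pochhammer (1 + (a - w - of_nat m)/2) l \<noteq> 0" for l using nz_poch[OF h8, of 0] by simp
  have bnz: "pochhammer (1 + a - b) l \<noteq> 0" for l using nz_poch[OF hb, of 0] by simp
  have cnz: "pochhammer (1 + a - c) l \<noteq> 0" for l using nz_poch[OF hc, of 0] by simp
  have dQ: "pochhammer (1 + a - w - of_nat m) (2*l) = of_nat (2^(2*l)) * pochhammer (1/2 + (a - w - of_nat m)/2) l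
      * pochhammer (1 + (a - w - of_nat m)/2) l" for l
  proof -
    have e1: "2 * (1/2 + (a - w - of_nat m)/2) = 1 + a - w - of_nat m" by (simp add: field_simps)
    have e2: "1/2 + (a - w - of_nat m)/2 + 1/2 = 1 + (a - w - of_nat m)/2" by simp
    show ?thesis using pochhammer_double[of "1/2 + (a - w - of_nat m)/2" l] unfolding e1 e2 .
  qed
  have da: "pochhammer a (2*l) = of_nat (2^(2*l)) * pochhammer (a/2) l * pochhammer (1/2 + a/2) l" for l
  proof -
    have e1: "2 * (a/2) = a" by simp
    have e2: "a/2 + 1/2 = 1/2 + a/2" by (rule add.commute)
    show ?thesis using pochhammer_double[of "a/2" l] unfolding e1 e2 .
  qed
  have hq: "1 + a - w - of_nat m + of_nat t \<noteq> 0" if t: "t < 2*m" for t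
  proof
    assume eq: "1 + a - w - of_nat m + of_nat t = 0"
    have "pochhammer (1 + a - w - of_nat m) (2*m) \<noteq> 0" unfolding dQ using nz1 nz2 by simp
    moreover have "pochhammer (1 + a - w - of_nat m) (2*m) = 0"
      unfolding pochhammer_eq_0_iff using t eq by (auto simp: eq_neg_iff_add_eq_0)
    ultimately show False by simp
  qed
  have trunc: "(\<Sum>j=0..A. f j) = (\<Sum>j=0..p. f j)" if "\<And>j. p < j \<Longrightarrow> f j = 0" "p \<le> A"
    for f :: "nat \<Rightarrow> complex" and p A
    using that by (intro sum.mono_neutral_right) auto
  define X where "X = 1 - of_nat k + a - b - c"
  have P1: "hypF [a/2, 1/2 + a/2, 1 - of_nat k + a - b - c, 1 + a - w, - of_nat m]
              [1 + a - b, 1 + a - c, 1/2 + (a - w - of_nat m)/2, 1 + (a - w - of_nat m)/2] m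
         = pochhammer w m / pochhammer (w - a) m *
           (\<Sum>n=0..m. pochhammer a n * pochhammer b n * pochhammer c n * pochhammer (- of_nat m) n
              / (fact n * pochhammer (1 + a - b) n * pochhammer (1 + a - c) n * pochhammer w n)
              * Q2 k n a b c)"
  proof -
    have H: "hypF [a/2, 1/2 + a/2, 1 - of_nat k + a - b - c, 1 + a - w, - of_nat m]
              [1 + a - b, 1 + a - c, 1/2 + (a - w - of_nat m)/2, 1 + (a - w - of_nat m)/2] m
        = (\<Sum>l=0..m. pochhammer a (2*l) * pochhammer X l * pochhammer (1+a-w) l * pochhammer (- of_nat m) l
            / (fact l * pochhammer (1+a-b) l * pochhammer (1+a-c) l * pochhammer (1+a-w-of_nat m) (2*l)))"
      unfolding hypF_def X_def
    proof (intro sum.cong refl)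
      fix l
      show "(\<Prod>u\<leftarrow>[a/2, 1/2 + a/2, 1 - of_nat k + a - b - c, 1 + a - w, - of_nat m]. pochhammer u l) /
          ((\<Prod>u\<leftarrow>[1 + a - b, 1 + a - c, 1/2 + (a - w - of_nat m)/2, 1 + (a - w - of_nat m)/2]. pochhammer u l) * fact l)
        = pochhammer a (2*l) * pochhammer (1 - of_nat k + a - b - c) l * pochhammer (1+a-w) l * pochhammer (- of_nat m) l
            / (fact l * pochhammer (1+a-b) l * pochhammer (1+a-c) l * pochhammer (1+a-w-of_nat m) (2*l))"
        unfolding da dQ using nz1[of l] nz2[of l] bnz[of l] cnz[of l]
        by (simp add: divide_simps ac_simps)
    qed
    have U: "pochhammer X l = (\<Sum>j=0..m. of_nat (l choose j) * pochhammer (- of_nat k) j * pochhammer (1+a-b-c) (l-j))"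
      if "l \<le> m" for l
    proof -
      have "pochhammer X l = pochhammer (- of_nat k + (1+a-b-c)) l" unfolding X_def by (simp add: algebra_simps)
      also have "\<dots> = (\<Sum>j\<le>l. of_nat (l choose j) * pochhammer (- of_nat k) j * pochhammer (1+a-b-c) (l-j))"
        by (rule pochhammer_binomial_sum)
      also have "\<dots> = (\<Sum>j=0..l. of_nat (l choose j) * pochhammer (- of_nat k) j * pochhammer (1+a-b-c) (l-j))"
        by (simp add: atMost_atLeast0)
      also have "\<dots> = (\<Sum>j=0..m. of_nat (l choose j) * pochhammer (- of_nat k) j * pochhammer (1+a-b-c) (l-j))"
        by (rule trunc[symmetric]) (auto simp: binomial_eq_0 that)
      finally show ?thesis .
    qed
    have QE: "Q2 k n a b c = (\<Sum>j=0..m. pochhammer (- of_nat k) j * (pochhammer (- of_nat n) j * pochhammer (of_nat n + a) j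
              / (fact j * pochhammer b j * pochhammer c j)))" if nm: "n \<le> m" for n
    proof -
      define f where "f = (\<lambda>j. pochhammer (- of_nat k) j * (pochhammer (- of_nat n) j * pochhammer (of_nat n + a) j
              / (fact j * pochhammer b j * pochhammer c j)) :: complex)"
      have fz: "f j = 0" if "min n k < j" for j
      proof -
        have "pochhammer (- of_nat n) j = (0::complex) \<or> pochhammer (- of_nat k) j = (0::complex)"
          using that pochhammer_of_nat_eq_0_lemma[of n j, where 'a=complex] pochhammer_of_nat_eq_0_lemma[of k j, where 'a=complex] by (auto simp: min_def split: if_splits)
        then show ?thesis unfolding f_def by auto
      qed
      have "Q2 k n a b c = (\<Sum>j=0..k. f j)" unfolding Q2_def f_def
        by (intro sum.cong refl) (simp add: ac_simps)
      also have "\<dots> = (\<Sum>j=0..min n k. f j)" by (rule trunc[where p="min n k"]) (auto simp: fz)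
      also have "\<dots> = (\<Sum>j=0..m. f j)" by (rule trunc[where p="min n k", symmetric]) (use nm in \<open>auto simp: fz min_le_iff_disj\<close>)
      finally show ?thesis unfolding f_def .
    qed
    show ?thesis unfolding H
      by (rule assemble[OF hb hc hw hB hC hwa hq U QE])
  qed
  have P2: "hypF [a/2, 1/2 + a/2, 1 - of_nat k + a - b - c, of_nat k + d, 1 + a - w, - of_nat m]
              [1 + a - b, 1 + a - c, d, 1/2 + (a - w - of_nat m)/2, 1 + (a - w - of_nat m)/2] m
         = pochhammer w m / pochhammer (w - a) m *
           (\<Sum>n=0..m. pochhammer a n * pochhammer b n * pochhammer c n * pochhammer (- of_nat m) n
              / (fact n * pochhammer (1 + a - b) n * pochhammer (1 + a - c) n * pochhammer w n)
              * Q2d k n a b c d)" if hd: "d \<notin> \<int>\<^sub>\<le>\<^sub>0"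
  proof -
    have dnz: "pochhammer (d + of_nat i) l \<noteq> 0" for i l using nz_poch[OF hd] by blast
    have dnz0: "pochhammer d l \<noteq> 0" for l using dnz[of 0] by simp
    define Uv where "Uv = (\<lambda>l. pochhammer X l * pochhammer (of_nat k + d) l / pochhammer d l)"
    have H: "hypF [a/2, 1/2 + a/2, 1 - of_nat k + a - b - c, of_nat k + d, 1 + a - w, - of_nat m]
              [1 + a - b, 1 + a - c, d, 1/2 + (a - w - of_nat m)/2, 1 + (a - w - of_nat m)/2] m
        = (\<Sum>l=0..m. pochhammer a (2*l) * Uv l * pochhammer (1+a-w) l * pochhammer (- of_nat m) l
            / (fact l * pochhammer (1+a-b) l * pochhammer (1+a-c) l * pochhammer (1+a-w-of_nat m) (2*l)))"
      unfolding hypF_def X_def Uv_def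
    proof (intro sum.cong refl)
      fix l
      show "(\<Prod>u\<leftarrow>[a/2, 1/2 + a/2, 1 - of_nat k + a - b - c, of_nat k + d, 1 + a - w, - of_nat m]. pochhammer u l) /
          ((\<Prod>u\<leftarrow>[1 + a - b, 1 + a - c, d, 1/2 + (a - w - of_nat m)/2, 1 + (a - w - of_nat m)/2]. pochhammer u l) * fact l)
        = pochhammer a (2*l) * (pochhammer (1 - of_nat k + a - b - c) l * pochhammer (of_nat k + d) l / pochhammer d l)
            * pochhammer (1+a-w) l * pochhammer (- of_nat m) l
            / (fact l * pochhammer (1+a-b) l * pochhammer (1+a-c) l * pochhammer (1+a-w-of_nat m) (2*l))"
        unfolding da dQ using nz1[of l] nz2[of l] bnz[of l] cnz[of l] dnz0[of l]
        by (simp add: divide_simps ac_simps)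
    qed
    define BB where "BB = of_nat k - 1 - a + b + c + d"
    have U: "Uv l = (\<Sum>j=0..m. of_nat (l choose j) * (pochhammer (- of_nat k) j * pochhammer BB j / pochhammer d j)
               * pochhammer (1+a-b-c) (l-j))"
      if lm: "l \<le> m" for l
    proof -
      have Cd: "d + of_nat t \<noteq> 0" for t
      proof
        assume "d + of_nat t = 0"
        then have "d = - of_nat t" by (simp add: eq_neg_iff_add_eq_0)
        then show False using hd by simp
      qed
      note S = saal[OF Cd, where A="- of_nat k" and B=BB and n=l]
      have e1: "d - (- of_nat k) - BB = 1 + a - b - c" unfolding BB_def by simp
      have e2: "d - (- of_nat k) = of_nat k + d" by simp
      have e3: "d - BB = X" unfolding BB_def X_def by simp
      have S2: "(\<Sum>j=0..l. of_nat (l choose j) * pochhammer (- of_nat k) j * pochhammer BB j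
          * pochhammer (d + of_nat j) (l-j) * pochhammer (1+a-b-c) (l-j)) = pochhammer (of_nat k + d) l * pochhammer X l"
        using S unfolding e1 unfolding e2 e3 .
      have "Uv l = (\<Sum>j=0..l. of_nat (l choose j) * pochhammer (- of_nat k) j * pochhammer BB j
          * pochhammer (d + of_nat j) (l-j) * pochhammer (1+a-b-c) (l-j)) / pochhammer d l"
        unfolding Uv_def S2 by (simp add: ac_simps)
      also have "\<dots> = (\<Sum>j=0..l. of_nat (l choose j) * (pochhammer (- of_nat k) j * pochhammer BB j / pochhammer d j)
               * pochhammer (1+a-b-c) (l-j))"
        unfolding sum_divide_distrib
      proof (intro sum.cong refl)
        fix j assume "j \<in> {0..l}"
        then have jl: "j \<le> l" by simp
        have pd: "pochhammer d l = pochhammer d j * pochhammer (d + of_nat j) (l-j)"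
          by (rule pochhammer_product[OF jl])
        show "of_nat (l choose j) * pochhammer (- of_nat k) j * pochhammer BB j
          * pochhammer (d + of_nat j) (l-j) * pochhammer (1+a-b-c) (l-j) / pochhammer d l
          = of_nat (l choose j) * (pochhammer (- of_nat k) j * pochhammer BB j / pochhammer d j)
               * pochhammer (1+a-b-c) (l-j)"
          unfolding pd using dnz0[of j] dnz[of j "l-j"] by (simp add: divide_simps ac_simps)
      qed
      also have "\<dots> = (\<Sum>j=0..m. of_nat (l choose j) * (pochhammer (- of_nat k) j * pochhammer BB j / pochhammer d j)
               * pochhammer (1+a-b-c) (l-j))"
        by (rule trunc[symmetric]) (auto simp: binomial_eq_0 lm)
      finally show ?thesis .
    qed
    have QE: "Q2d k n a b c d = (\<Sum>j=0..m. (pochhammer (- of_nat k) j * pochhammer BB j / pochhammer d j)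
              * (pochhammer (- of_nat n) j * pochhammer (of_nat n + a) j
              / (fact j * pochhammer b j * pochhammer c j)))" if nm: "n \<le> m" for n
    proof -
      define f where "f = (\<lambda>j. (pochhammer (- of_nat k) j * pochhammer BB j / pochhammer d j)
              * (pochhammer (- of_nat n) j * pochhammer (of_nat n + a) j
              / (fact j * pochhammer b j * pochhammer c j)) :: complex)"
      have fz: "f j = 0" if "min n k < j" for j
      proof -
        have "pochhammer (- of_nat n) j = (0::complex) \<or> pochhammer (- of_nat k) j = (0::complex)"
          using that pochhammer_of_nat_eq_0_lemma[of n j, where 'a=complex] pochhammer_of_nat_eq_0_lemma[of k j, where 'a=complex] by (auto simp: min_def split: if_splits)
        then show ?thesis unfolding f_def by auto
      qed
      have "Q2d k n a b c d = (\<Sum>j=0..k. f j)" unfolding Q2d_def f_def BB_def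
        by (intro sum.cong refl) (simp add: ac_simps)
      also have "\<dots> = (\<Sum>j=0..min n k. f j)" by (rule trunc[where p="min n k"]) (auto simp: fz)
      also have "\<dots> = (\<Sum>j=0..m. f j)" by (rule trunc[where p="min n k", symmetric]) (use nm in \<open>auto simp: fz min_le_iff_disj\<close>)
      finally show ?thesis unfolding f_def .
    qed
    show ?thesis unfolding H
      by (rule assemble[OF hb hc hw hB hC hwa hq U QE])
  qed
  show ?thesis using P1 P2 by blast
qed

end
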